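(* Let $(g,\alpha)$ be a null contact structure on an oriented three-manifold $M$ which is K-contact. Then $(g,\alpha)$ is Sasakian.
   Context: Let $M$ be an oriented three-manifold with a Lorentzian metric $g$ of signature $(-,+,+)$, oriented and time-oriented; set $s_g=-1$. $\star_g$ denotes the Hodge star of $g$ and the orientation, defined by $\beta\wedge\star_g\gamma=g^{-1}(\beta,\gamma)\,\nu_g$; $\sharp$ is the musical isomorphism induced by $g$, $\iota_v$ the interior product, $\mathcal{L}$ the Lie derivative. Exterior derivative convention: $\mathrm{d}\alpha(X,Y)=X(\alpha(Y))-Y(\alpha(X))-\alpha([X,Y])$. A null contact structure is a pair $(g,\alpha)$ with $\alpha\in\Omega^1(M)$ nowhere vanishing such that $\alpha=\star_g\mathrm{d}\alpha$ and $|\alpha|_g^2=0$. Its Reeb vector field is $\xi=\alpha^\sharp$, $\phi(v)=-s_g(\iota_v\star_g\alpha)^\sharp$, and $\mathfrak{h}=\mathcal{L}_\xi\phi$. It is called Sasakian if $\mathfrak{h}=0$ and K-contact if $\mathcal{L}_\xi g=0$. *)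

theory Defs
  imports "HOL-Analysis.Analysis"
begin

text \<open>Local coordinate rendering on an open set U of R^3 (an oriented chart of M,
with the standard orientation dx1,dx2,dx3 of R^3).  One-forms and vector fields are
given by their component vectors real^3, (0,2)-tensors and 2-forms by matrices
real^3^3 (entry i j = value on the coordinate vectors d_i, d_j), and (1,1)-tensors by
matrices F with F *v v the image of the vector v.\<close>

definition coord_line :: "3 \<Rightarrow> (real^3 \<Rightarrow> real) \<Rightarrow> real^3 \<Rightarrow> real \<Rightarrow> real" where
  "coord_line i f p = (\<lambda>t. f (p + t *\<^sub>R axis i 1))"

definition pd :: "3 \<Rightarrow> (real^3 \<Rightarrow> real) \<Rightarrow> real^3 \<Rightarrow> real" where
  "pd i f p = deriv (coord_line i f p) 0"

definition pd_exists :: "3 \<Rightarrow> (real^3 \<Rightarrow> real) \<Rightarrow> real^3 \<Rightarrow> bool" where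
  "pd_exists i f p \<longleftrightarrow> coord_line i f p differentiable (at 0)"

fun smoothk :: "nat \<Rightarrow> (real^3 \<Rightarrow> real) \<Rightarrow> (real^3) set \<Rightarrow> bool" where
  "smoothk 0 f U = continuous_on U f"
| "smoothk (Suc k) f U = (continuous_on U f \<and> (\<forall>i. \<forall>p\<in>U. pd_exists i f p)
                          \<and> (\<forall>i. smoothk k (pd i f) U))"

definition smooth_fun_on :: "(real^3) set \<Rightarrow> (real^3 \<Rightarrow> real) \<Rightarrow> bool" where
  "smooth_fun_on U f \<longleftrightarrow> (\<forall>k. smoothk k f U)"

definition eta3 :: "real^3^3" where
  "eta3 = (\<chi> i j. if i = j then (if i = 1 then -1 else 1) else 0)"

definition lorentzian :: "real^3^3 \<Rightarrow> bool" where
  "lorentzian G \<longleftrightarrow> transpose G = G \<and>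
     (\<exists>P::real^3^3. invertible P \<and> transpose P ** G ** P = eta3)"

text \<open>Lorentzian metric on U, smooth and time-oriented (the chart is positively oriented).\<close>
definition lorentz_metric_on :: "(real^3) set \<Rightarrow> (real^3 \<Rightarrow> real^3^3) \<Rightarrow> bool" where
  "lorentz_metric_on U g \<longleftrightarrow> open U \<and> (\<forall>p\<in>U. lorentzian (g p))
     \<and> (\<forall>i j. smooth_fun_on U (\<lambda>p. g p $ i $ j))
     \<and> (\<exists>T. continuous_on U T \<and> (\<forall>p\<in>U. T p \<bullet> (g p *v T p) < 0))"

text \<open>Sign of the determinant of a Lorentzian metric.\<close>
definition s_g :: real where "s_g = -1"

definition is_2form :: "real^3^3 \<Rightarrow> bool" where
  "is_2form w \<longleftrightarrow> (\<forall>i j. w $ i $ j = - w $ j $ i)"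

text \<open>(b \<and> w)(d_1,d_2,d_3) for a 1-form b and a 2-form w (also equal to (w \<and> b)(d_1,d_2,d_3)).\<close>
definition wedge12 :: "real^3 \<Rightarrow> real^3^3 \<Rightarrow> real" where
  "wedge12 b w = b$1 * w$2$3 - b$2 * w$1$3 + b$3 * w$1$2"

text \<open>Induced inner products g^{-1}(.,.) on 1-forms and 2-forms (Gi = inverse metric).\<close>
definition ip1 :: "real^3^3 \<Rightarrow> real^3 \<Rightarrow> real^3 \<Rightarrow> real" where
  "ip1 Gi a b = (\<Sum>i\<in>UNIV. \<Sum>j\<in>UNIV. Gi$i$j * a$i * b$j)"

definition ip2 :: "real^3^3 \<Rightarrow> real^3^3 \<Rightarrow> real^3^3 \<Rightarrow> real" where
  "ip2 Gi w z = (1/2) * (\<Sum>i\<in>UNIV. \<Sum>j\<in>UNIV. \<Sum>k\<in>UNIV. \<Sum>l\<in>UNIV.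
                     Gi$i$k * Gi$j$l * w$i$j * z$k$l)"

text \<open>Riemannian volume form nu_g evaluated on (d_1,d_2,d_3).\<close>
definition vol :: "real^3^3 \<Rightarrow> real" where
  "vol G = sqrt \<bar>det G\<bar>"

definition hodge1 :: "real^3^3 \<Rightarrow> real^3 \<Rightarrow> real^3^3" where
  "hodge1 G a = (THE w. is_2form w \<and>
      (\<forall>b. wedge12 b w = ip1 (matrix_inv G) b a * vol G))"

definition hodge2 :: "real^3^3 \<Rightarrow> real^3^3 \<Rightarrow> real^3" where
  "hodge2 G w = (THE a. \<forall>b. is_2form b \<longrightarrow> wedge12 a b = ip2 (matrix_inv G) b w * vol G)"

definition dform :: "(real^3 \<Rightarrow> real^3) \<Rightarrow> real^3 \<Rightarrow> real^3^3" where
  "dform a p = (\<chi> i j. pd i (\<lambda>q. a q $ j) p - pd j (\<lambda>q. a q $ i) p)"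

definition null_contact :: "(real^3) set \<Rightarrow> (real^3 \<Rightarrow> real^3^3) \<Rightarrow> (real^3 \<Rightarrow> real^3) \<Rightarrow> bool" where
  "null_contact U g a \<longleftrightarrow> lorentz_metric_on U g
     \<and> (\<forall>i. smooth_fun_on U (\<lambda>p. a p $ i))
     \<and> (\<forall>p\<in>U. a p \<noteq> 0)
     \<and> (\<forall>p\<in>U. a p = hodge2 (g p) (dform a p))
     \<and> (\<forall>p\<in>U. ip1 (matrix_inv (g p)) (a p) (a p) = 0)"

definition reeb :: "(real^3 \<Rightarrow> real^3^3) \<Rightarrow> (real^3 \<Rightarrow> real^3) \<Rightarrow> real^3 \<Rightarrow> real^3" where
  "reeb g a p = matrix_inv (g p) *v a p"

text \<open>phi(v) = - s_g (iota_v star alpha)^sharp, as a (1,1)-tensor (matrix).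
  (iota_v w)_j = sum_i v_i w_ij = (transpose w *v v)_j.\<close>
definition phi :: "(real^3 \<Rightarrow> real^3^3) \<Rightarrow> (real^3 \<Rightarrow> real^3) \<Rightarrow> real^3 \<Rightarrow> real^3^3" where
  "phi g a p = (- s_g) *\<^sub>R (matrix_inv (g p) ** transpose (hodge1 (g p) (a p)))"

definition lie11 :: "(real^3 \<Rightarrow> real^3) \<Rightarrow> (real^3 \<Rightarrow> real^3^3) \<Rightarrow> real^3 \<Rightarrow> real^3^3" where
  "lie11 X F p = (\<chi> k i.
      (\<Sum>m\<in>UNIV. X p $ m * pd m (\<lambda>q. F q $ k $ i) p)
    - (\<Sum>m\<in>UNIV. F p $ m $ i * pd m (\<lambda>q. X q $ k) p)
    + (\<Sum>m\<in>UNIV. F p $ k $ m * pd i (\<lambda>q. X q $ m) p))"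

definition lie02 :: "(real^3 \<Rightarrow> real^3) \<Rightarrow> (real^3 \<Rightarrow> real^3^3) \<Rightarrow> real^3 \<Rightarrow> real^3^3" where
  "lie02 X G p = (\<chi> i j.
      (\<Sum>m\<in>UNIV. X p $ m * pd m (\<lambda>q. G q $ i $ j) p)
    + (\<Sum>m\<in>UNIV. G p $ m $ j * pd i (\<lambda>q. X q $ m) p)
    + (\<Sum>m\<in>UNIV. G p $ i $ m * pd j (\<lambda>q. X q $ m) p))"

definition frak_h :: "(real^3 \<Rightarrow> real^3^3) \<Rightarrow> (real^3 \<Rightarrow> real^3) \<Rightarrow> real^3 \<Rightarrow> real^3^3" where
  "frak_h g a = lie11 (reeb g a) (phi g a)"

definition sasakian :: "(real^3) set \<Rightarrow> (real^3 \<Rightarrow> real^3^3) \<Rightarrow> (real^3 \<Rightarrow> real^3) \<Rightarrow> bool" where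
  "sasakian U g a \<longleftrightarrow> (\<forall>p\<in>U. frak_h g a p = 0)"

definition K_contact :: "(real^3) set \<Rightarrow> (real^3 \<Rightarrow> real^3^3) \<Rightarrow> (real^3 \<Rightarrow> real^3) \<Rightarrow> bool" where
  "K_contact U g a \<longleftrightarrow> (\<forall>p\<in>U. lie02 (reeb g a) g p = 0)"

end

theory Submission
  imports Defs
begin


definition Cx :: "real^3 \<Rightarrow> real^3^3" where
  "Cx x = vector [vector [0, - x$3, x$2], vector [x$3, 0, - x$1], vector [- x$2, x$1, 0]]"

definition adj3 :: "real^3^3 \<Rightarrow> real^3^3" where
  "adj3 A = vector [
    vector [A$2$2*A$3$3 - A$2$3*A$3$2, A$1$3*A$3$2 - A$1$2*A$3$3, A$1$2*A$2$3 - A$1$3*A$2$2],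
    vector [A$2$3*A$3$1 - A$2$1*A$3$3, A$1$1*A$3$3 - A$1$3*A$3$1, A$1$3*A$2$1 - A$1$1*A$2$3],
    vector [A$2$1*A$3$2 - A$2$2*A$3$1, A$1$2*A$3$1 - A$1$1*A$3$2, A$1$1*A$2$2 - A$1$2*A$2$1]]"

lemma adj3_right: "A ** adj3 A = det A *\<^sub>R mat 1"
  by (simp add: adj3_def matrix_matrix_mult_def sum_3 det_3 vec_eq_iff forall_3 vector_def mat_def algebra_simps)

lemma adj3_left: "adj3 A ** A = det A *\<^sub>R mat 1"
  by (simp add: adj3_def matrix_matrix_mult_def sum_3 det_3 vec_eq_iff forall_3 vector_def mat_def algebra_simps)

lemma matrix_inv_eq:
  fixes A B :: "real^3^3"
  assumes "A ** B = mat 1" "B ** A = mat 1"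
  shows "matrix_inv A = B"
proof -
  have inv: "invertible A" using assms unfolding invertible_def by blast
  have "A ** matrix_inv A = mat 1 \<and> matrix_inv A ** A = mat 1"
    unfolding matrix_inv_def by (rule someI_ex) (use inv in \<open>simp add: invertible_def\<close>)
  then have "matrix_inv A = matrix_inv A ** (A ** B)" "matrix_inv A ** A = mat 1" using assms by auto
  then show ?thesis by (simp add: matrix_mul_assoc)
qed

lemma smul_left: "((c::real) *\<^sub>R (A::real^3^3)) ** B = c *\<^sub>R (A ** B)"
  by (simp add: matrix_matrix_mult_def vec_eq_iff sum_distrib_left algebra_simps)
lemma smul_right: "(A::real^3^3) ** ((c::real) *\<^sub>R B) = c *\<^sub>R (A ** B)"
  by (simp add: matrix_matrix_mult_def vec_eq_iff sum_distrib_left algebra_simps)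

lemma matrix_inv_adj3:
  fixes A :: "real^3^3"
  assumes "det A \<noteq> 0"
  shows "matrix_inv A = (1 / det A) *\<^sub>R adj3 A"
  apply (rule matrix_inv_eq)
  using assms by (simp_all add: smul_left smul_right adj3_right adj3_left)

lemma inv_props:
  fixes A :: "real^3^3"
  assumes "det A \<noteq> 0"
  shows "A ** matrix_inv A = mat 1" "matrix_inv A ** A = mat 1"
  using assms by (simp_all add: matrix_inv_adj3 smul_left smul_right adj3_right adj3_left)

lemma cofactor_identity:
  fixes J :: "real^3^3" and x :: "real^3"
  shows "transpose J ** Cx x + Cx x ** J + Cx (J *v x) = trace J *\<^sub>R Cx x"
  by (simp add: Cx_def matrix_matrix_mult_def matrix_vector_mult_def transpose_def trace_def
       sum_3 vec_eq_iff forall_3 vector_def algebra_simps)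

lemma ip1_eq: "ip1 M b a = (\<Sum>i\<in>UNIV. b$i * (M *v a)$i)"
  by (simp add: ip1_def matrix_vector_mult_def sum_distrib_left algebra_simps)

lemma hodge1_eq: "hodge1 G a = (- vol G) *\<^sub>R Cx (matrix_inv G *v a)"
  unfolding hodge1_def
proof (rule the_equality)
  show "is_2form ((- vol G) *\<^sub>R Cx (matrix_inv G *v a)) \<and>
    (\<forall>b. wedge12 b ((- vol G) *\<^sub>R Cx (matrix_inv G *v a)) = ip1 (matrix_inv G) b a * vol G)"
    by (simp add: is_2form_def wedge12_def ip1_eq Cx_def forall_3 vector_def sum_3 algebra_simps)
next
  fix w assume w: "is_2form w \<and> (\<forall>b. wedge12 b w = ip1 (matrix_inv G) b a * vol G)"
  have as: "w$i$j = - w$j$i" for i j using w unfolding is_2form_def by blast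
  have d: "w$i$i = 0" for i using as[of i i] by simp
  have e1: "wedge12 (axis 1 1) w = ip1 (matrix_inv G) (axis 1 1) a * vol G" using w by blast
  have e2: "wedge12 (axis 2 1) w = ip1 (matrix_inv G) (axis 2 1) a * vol G" using w by blast
  have e3: "wedge12 (axis 3 1) w = ip1 (matrix_inv G) (axis 3 1) a * vol G" using w by blast
  show "w = (- vol G) *\<^sub>R Cx (matrix_inv G *v a)"
    using e1 e2 e3 d as[of 1 2] as[of 1 3] as[of 2 3]
    by (simp add: wedge12_def ip1_eq Cx_def vec_eq_iff forall_3 vector_def sum_3 axis_def algebra_simps)
qed

lemma transpose_Cx: "transpose (- (c *\<^sub>R Cx x)) = c *\<^sub>R Cx x"
  by (simp add: transpose_def Cx_def vec_eq_iff forall_3 vector_def)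

lemma phi_eq: "phi g a p = vol (g p) *\<^sub>R (matrix_inv (g p) ** Cx (reeb g a p))"
  by (simp add: phi_def hodge1_eq transpose_Cx s_g_def reeb_def smul_right)



definition MD :: "(real \<Rightarrow> real^3^3) \<Rightarrow> real^3^3 \<Rightarrow> bool" where
  "MD f M \<longleftrightarrow> (\<forall>i j. ((\<lambda>t. f t $ i $ j) has_real_derivative M $ i $ j) (at 0))"

definition VD :: "(real \<Rightarrow> real^3) \<Rightarrow> real^3 \<Rightarrow> bool" where
  "VD f v \<longleftrightarrow> (\<forall>i. ((\<lambda>t. f t $ i) has_real_derivative v $ i) (at 0))"

lemma MD_mult:
  assumes "MD A A'" "MD B B'"
  shows "MD (\<lambda>t. A t ** B t) (A' ** B 0 + A 0 ** B')"
  unfolding MD_def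
proof (intro allI)
  fix i j
  have "((\<lambda>t. \<Sum>k\<in>UNIV. A t$i$k * B t$k$j) has_real_derivative
      (\<Sum>k\<in>UNIV. A'$i$k * B 0$k$j + B'$k$j * A 0$i$k)) (at 0)"
    by (rule DERIV_sum, rule DERIV_mult) (use assms in \<open>auto simp: MD_def\<close>)
  then show "((\<lambda>t. (A t ** B t) $ i $ j) has_real_derivative (A' ** B 0 + A 0 ** B') $ i $ j) (at 0)"
    by (simp add: matrix_matrix_mult_def sum.distrib algebra_simps)
qed

lemma MV_mult:
  assumes "MD A A'" "VD x x'"
  shows "VD (\<lambda>t. A t *v x t) (A' *v x 0 + A 0 *v x')"
  unfolding VD_def
proof (intro allI)
  fix i
  have "((\<lambda>t. \<Sum>k\<in>UNIV. A t$i$k * x t$k) has_real_derivative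
      (\<Sum>k\<in>UNIV. A'$i$k * x 0$k + x'$k * A 0$i$k)) (at 0)"
    by (rule DERIV_sum, rule DERIV_mult) (use assms in \<open>auto simp: MD_def VD_def\<close>)
  then show "((\<lambda>t. (A t *v x t) $ i) has_real_derivative (A' *v x 0 + A 0 *v x') $ i) (at 0)"
    by (simp add: matrix_vector_mult_def sum.distrib algebra_simps)
qed

lemma MD_scale:
  assumes "(f has_real_derivative d) (at 0)" "MD A A'"
  shows "MD (\<lambda>t. f t *\<^sub>R A t) (d *\<^sub>R A 0 + f 0 *\<^sub>R A')"
  unfolding MD_def
proof (intro allI)
  fix i j
  have "((\<lambda>t. f t * A t$i$j) has_real_derivative d * A 0$i$j + A'$i$j * f 0) (at 0)"
    by (rule DERIV_mult) (use assms in \<open>auto simp: MD_def\<close>)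
  then show "((\<lambda>t. (f t *\<^sub>R A t) $ i $ j) has_real_derivative (d *\<^sub>R A 0 + f 0 *\<^sub>R A') $ i $ j) (at 0)"
    by (simp add: algebra_simps)
qed

lemma MD_Cx:
  assumes "VD x x'"
  shows "MD (\<lambda>t. Cx (x t)) (Cx x')"
  unfolding MD_def
proof (intro allI)
  fix i j :: 3
  have h: "\<And>k. ((\<lambda>t. x t $ k) has_real_derivative x' $ k) (at 0)" using assms by (simp add: VD_def)
  have hm: "\<And>k. ((\<lambda>t. - x t $ k) has_real_derivative - x' $ k) (at 0)" by (rule DERIV_minus[OF h])
  show "((\<lambda>t. Cx (x t) $ i $ j) has_real_derivative Cx x' $ i $ j) (at 0)"
    using exhaust_3[of i] exhaust_3[of j] by (auto simp add: Cx_def vector_def h hm)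
qed

lemma MD_imp_diff:
  assumes "MD A A'" shows "(\<lambda>t. A t $ i $ j) differentiable (at 0)"
  using assms unfolding MD_def by (meson real_differentiable_def)

lemma det_deriv:
  assumes "MD A A'"
  shows "((\<lambda>t. det (A t)) has_real_derivative trace (adj3 (A 0) ** A')) (at 0)"
proof -
  have hA: "\<And>i j. ((\<lambda>t. A t$i$j) has_real_derivative A'$i$j) (at 0)" using assms by (simp add: MD_def)
  show ?thesis
    unfolding det_3
    by (auto intro!: derivative_eq_intros hA simp: trace_def adj3_def matrix_matrix_mult_def sum_3 vector_def algebra_simps)
qed



lemma ev_det_ne:
  assumes "MD A A'" "det (A 0) \<noteq> 0"
  shows "eventually (\<lambda>t. det (A t) \<noteq> 0) (nhds 0)"
proof -
  have "isCont (\<lambda>t. det (A t)) 0" using DERIV_isCont[OF det_deriv[OF assms(1)]] .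
  then have "((\<lambda>t. det (A t)) \<longlongrightarrow> det (A 0)) (at 0)" by (simp add: isCont_def)
  then have "eventually (\<lambda>t. det (A t) \<noteq> 0) (at 0)" using assms(2) by (rule tendsto_imp_eventually_ne)
  then show ?thesis using assms(2) by (simp add: eventually_nhds_conv_at)
qed

lemma ev_det_neg:
  assumes "MD A A'" "det (A 0) < 0"
  shows "eventually (\<lambda>t. det (A t) < 0) (nhds 0)"
proof -
  have "isCont (\<lambda>t. det (A t)) 0" using DERIV_isCont[OF det_deriv[OF assms(1)]] .
  then have "((\<lambda>t. det (A t)) \<longlongrightarrow> det (A 0)) (at 0)" by (simp add: isCont_def)
  then have "eventually (\<lambda>t. det (A t) < 0) (at 0)" using assms(2) by (rule order_tendstoD(2))
  then show ?thesis using assms(2) by (simp add: eventually_nhds_conv_at)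
qed

lemma mat_neg_right: "(A::real^3^3) ** (- B) = - (A ** B)"
  by (simp add: matrix_matrix_mult_def vec_eq_iff sum_negf)

lemma MD_inv:
  assumes "MD A A'" "det (A 0) \<noteq> 0"
  shows "MD (\<lambda>t. matrix_inv (A t)) (- (matrix_inv (A 0) ** A' ** matrix_inv (A 0)))"
proof -
  have ev: "eventually (\<lambda>t. det (A t) \<noteq> 0) (nhds 0)" by (rule ev_det_ne[OF assms])
  have dd: "(\<lambda>t. det (A t)) differentiable (at 0)"
    using det_deriv[OF assms(1)] by (meson real_differentiable_def)
  have hd: "\<And>i j. (\<lambda>t. A t $ i $ j) differentiable (at 0)" using MD_imp_diff[OF assms(1)] .
  have adjd: "(\<lambda>t. adj3 (A t) $ i $ j) differentiable (at 0)" for i j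
    using exhaust_3[of i] exhaust_3[of j] by (auto simp add: adj3_def vector_def hd)
  have ex: "((\<lambda>t. matrix_inv (A t) $ i $ j) has_real_derivative deriv (\<lambda>t. matrix_inv (A t) $ i $ j) 0) (at 0)" for i j
  proof -
    have "(\<lambda>t. adj3 (A t) $ i $ j / det (A t)) differentiable (at 0)"
      using adjd dd assms(2) by (intro differentiable_divide) auto
    then obtain D where D: "((\<lambda>t. adj3 (A t) $ i $ j / det (A t)) has_real_derivative D) (at 0)"
      by (auto simp: real_differentiable_def)
    have "eventually (\<lambda>t. adj3 (A t) $ i $ j / det (A t) = matrix_inv (A t) $ i $ j) (nhds 0)"
      using ev by eventually_elim (simp add: matrix_inv_adj3)
    then have "((\<lambda>t. matrix_inv (A t) $ i $ j) has_real_derivative D) (at 0)"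
      by (rule DERIV_cong_ev[OF refl _ refl, THEN iffD1, OF _ D])
    then show ?thesis by (metis DERIV_imp_deriv)
  qed
  define B' where "B' = (\<chi> i j. deriv (\<lambda>t. matrix_inv (A t) $ i $ j) 0)"
  have MB: "MD (\<lambda>t. matrix_inv (A t)) B'" unfolding MD_def B'_def using ex by simp
  have MP: "MD (\<lambda>t. A t ** matrix_inv (A t)) (A' ** matrix_inv (A 0) + A 0 ** B')"
    by (rule MD_mult[OF assms(1) MB])
  have zero: "A' ** matrix_inv (A 0) + A 0 ** B' = 0"
  proof -
    have "(A' ** matrix_inv (A 0) + A 0 ** B') $ i $ j = 0" for i j
    proof -
      have d1: "((\<lambda>t. (A t ** matrix_inv (A t)) $ i $ j) has_real_derivative
          (A' ** matrix_inv (A 0) + A 0 ** B') $ i $ j) (at 0)" using MP by (simp add: MD_def)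
      have "eventually (\<lambda>t. (A t ** matrix_inv (A t)) $ i $ j = (mat 1 :: real^3^3) $ i $ j) (nhds 0)"
        using ev by eventually_elim (simp add: inv_props)
      then have "((\<lambda>t. (mat 1 :: real^3^3) $ i $ j) has_real_derivative
          (A' ** matrix_inv (A 0) + A 0 ** B') $ i $ j) (at 0)"
        by (rule DERIV_cong_ev[OF refl _ refl, THEN iffD1, OF _ d1])
      then show ?thesis using DERIV_const DERIV_unique by metis
    qed
    then show ?thesis by (simp add: vec_eq_iff)
  qed
  have "B' = matrix_inv (A 0) ** (A 0 ** B')"
    using inv_props[OF assms(2)] by (simp add: matrix_mul_assoc)
  also have "A 0 ** B' = - (A' ** matrix_inv (A 0))" using zero by (simp add: eq_neg_iff_add_eq_0 add.commute)
  finally have "B' = - (matrix_inv (A 0) ** A' ** matrix_inv (A 0))"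
    by (simp add: mat_neg_right matrix_mul_assoc)
  then show ?thesis using MB by simp
qed

lemma trace_smul: "trace ((c::real) *\<^sub>R (M::real^3^3)) = c * trace M"
  by (simp add: trace_def sum_distrib_left)

lemma vol_deriv:
  assumes "MD A A'" "det (A 0) < 0"
  shows "((\<lambda>t. vol (A t)) has_real_derivative vol (A 0) / 2 * trace (matrix_inv (A 0) ** A')) (at 0)"
proof -
  let ?d = "det (A 0)" and ?dd = "trace (adj3 (A 0) ** A')"
  have dd: "((\<lambda>t. det (A t)) has_real_derivative ?dd) (at 0)" by (rule det_deriv[OF assms(1)])
  have ev: "eventually (\<lambda>t. sqrt (- det (A t)) = vol (A t)) (nhds 0)"
    using ev_det_neg[OF assms] by eventually_elim (simp add: vol_def)
  have "((\<lambda>t. sqrt (- det (A t))) has_real_derivative inverse (sqrt (- ?d)) / 2 * (- ?dd)) (at 0)"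
    using assms(2) by (auto intro!: derivative_eq_intros dd)
  then have D: "((\<lambda>t. vol (A t)) has_real_derivative inverse (sqrt (- ?d)) / 2 * (- ?dd)) (at 0)"
    by (rule DERIV_cong_ev[OF refl ev refl, THEN iffD1])
  have s: "sqrt (- ?d) > 0" "(sqrt (- ?d))^2 = - ?d" using assms(2) by auto
  have "vol (A 0) / 2 * trace (matrix_inv (A 0) ** A') = sqrt (- ?d) / 2 * (?dd / ?d)"
    using assms(2) by (simp add: vol_def matrix_inv_adj3 smul_left trace_smul)
  also have "\<dots> = inverse (sqrt (- ?d)) / 2 * (- ?dd)"
  proof -
    have ss: "sqrt (- ?d) * sqrt (- ?d) = - ?d" using assms(2) by simp
    have "sqrt (- ?d) * (sqrt (- ?d) * ?dd) = - (?d * ?dd)"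
      by (metis ss mult.assoc mult_minus_left)
    then show ?thesis using s(1) assms(2) by (simp add: field_simps)
  qed
  finally show ?thesis using D by simp
qed



lemma mm_add_l: "(A::real^3^3) ** (B + C) = A ** B + A ** C"
  by (simp add: matrix_matrix_mult_def vec_eq_iff sum.distrib algebra_simps)
lemma mm_add_r: "((A::real^3^3) + B) ** C = A ** C + B ** C"
  by (simp add: matrix_matrix_mult_def vec_eq_iff sum.distrib algebra_simps)
lemma mm_neg_l: "(- (A::real^3^3)) ** B = - (A ** B)"
  by (simp add: matrix_matrix_mult_def vec_eq_iff sum_negf)
lemma mm_diff_l: "(A::real^3^3) ** (B - C) = A ** B - A ** C"
  by (simp add: matrix_matrix_mult_def vec_eq_iff sum_subtractf algebra_simps)
lemma mm_diff_r: "((A::real^3^3) - B) ** C = A ** C - B ** C"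
  by (simp add: matrix_matrix_mult_def vec_eq_iff sum_subtractf algebra_simps)
lemma Cx_add: "Cx (x + y) = Cx x + Cx y"
  by (simp add: Cx_def vec_eq_iff forall_3 vector_def)
lemma Cx_smul: "Cx (c *\<^sub>R x) = c *\<^sub>R Cx x"
  by (simp add: Cx_def vec_eq_iff forall_3 vector_def)
lemma trace_transpose': "trace (transpose (M::real^3^3)) = trace M"
  by (simp add: trace_def transpose_def)
lemma mm_zero_r: "(A::real^3^3) ** 0 = 0"
  by (simp add: matrix_matrix_mult_def vec_eq_iff)

lemma trace_neg: "trace (- (M::real^3^3)) = - trace M"
  by (simp add: trace_def sum_negf)

lemmas mm_lin = trace_neg mm_add_l mm_add_r mm_neg_l mat_neg_right mm_diff_l mm_diff_r smul_left smul_right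
  trace_add trace_sub trace_smul Cx_add Cx_smul

lemma final_alg:
  fixes G Ai :: "real^3^3" and x :: "real^3" and Gd :: "3 \<Rightarrow> real^3^3" and xd :: "3 \<Rightarrow> real^3"
    and v :: real
  assumes GA: "G ** Ai = mat 1" "Ai ** G = mat 1"
    and K: "(\<chi> i j. (\<Sum>m\<in>UNIV. x$m * Gd m $i$j) + (\<Sum>m\<in>UNIV. G$m$j * xd i $ m)
               + (\<Sum>m\<in>UNIV. G$i$m * xd j $ m)) = (0::real^3^3)"
    and P: "P = v *\<^sub>R (Ai ** Cx x)"
    and Pd: "\<And>m. Pd m = (v/2 * trace (Ai ** Gd m)) *\<^sub>R (Ai ** Cx x)
               + v *\<^sub>R ((- (Ai ** Gd m ** Ai)) ** Cx x + Ai ** Cx (xd m))"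
  shows "(\<chi> k i. (\<Sum>m\<in>UNIV. x$m * Pd m $k$i) - (\<Sum>m\<in>UNIV. P$m$i * xd m $k)
               + (\<Sum>m\<in>UNIV. P$k$m * xd i $m)) = (0::real^3^3)"
proof -
  define J :: "real^3^3" where "J = (\<chi> k m. xd m $ k)"
  define DG where "DG = x$1 *\<^sub>R Gd 1 + x$2 *\<^sub>R Gd 2 + x$3 *\<^sub>R Gd 3"
  define C where "C = Cx x"
  have DGe: "DG = - (transpose J ** G + G ** J)"
  proof -
    have "DG + (transpose J ** G + G ** J) = 0"
      using K unfolding DG_def J_def
      by (simp add: vec_eq_iff matrix_matrix_mult_def transpose_def sum_3 algebra_simps)
    then show ?thesis by (rule eq_neg_iff_add_eq_0[THEN iffD2])
  qed
  have Jx: "J *v x = x$1 *\<^sub>R xd 1 + x$2 *\<^sub>R xd 2 + x$3 *\<^sub>R xd 3"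
    unfolding J_def by (simp add: vec_eq_iff matrix_vector_mult_def sum_3 algebra_simps)
  have lhs: "(\<chi> k i. (\<Sum>m\<in>UNIV. x$m * Pd m $k$i) - (\<Sum>m\<in>UNIV. P$m$i * xd m $k)
               + (\<Sum>m\<in>UNIV. P$k$m * xd i $m)) =
        (x$1 *\<^sub>R Pd 1 + x$2 *\<^sub>R Pd 2 + x$3 *\<^sub>R Pd 3) - J ** P + P ** J"
    unfolding J_def by (simp add: vec_eq_iff matrix_matrix_mult_def sum_3 algebra_simps)
  have S: "x$1 *\<^sub>R Pd 1 + x$2 *\<^sub>R Pd 2 + x$3 *\<^sub>R Pd 3 =
      (v/2 * trace (Ai ** DG)) *\<^sub>R (Ai ** C) + v *\<^sub>R ((- (Ai ** DG ** Ai)) ** C + Ai ** Cx (J *v x))"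
    unfolding Pd DG_def Jx C_def by (simp add: mm_lin algebra_simps)
  have tr: "trace (Ai ** DG) = - 2 * trace J"
  proof -
    have "trace (Ai ** (transpose J ** G)) = trace J"
      by (metis trace_mul_sym matrix_mul_assoc GA(1) matrix_mul_rid trace_transpose')
    moreover have "trace (Ai ** (G ** J)) = trace J"
      by (metis matrix_mul_assoc GA(2) matrix_mul_lid)
    ultimately show ?thesis unfolding DGe by (simp add: mm_lin)
  qed
  have AD: "Ai ** DG ** Ai = - (Ai ** transpose J + J ** Ai)"
    unfolding DGe by (simp add: mm_lin matrix_mul_assoc[symmetric] GA) (simp add: matrix_mul_assoc GA)
  have cof: "transpose J ** C + C ** J + Cx (J *v x) = trace J *\<^sub>R C"
    unfolding C_def by (rule cofactor_identity)
  have "(x$1 *\<^sub>R Pd 1 + x$2 *\<^sub>R Pd 2 + x$3 *\<^sub>R Pd 3) - J ** P + P ** J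
        = v *\<^sub>R (Ai ** (transpose J ** C + C ** J + Cx (J *v x) - trace J *\<^sub>R C))"
    unfolding S tr AD P C_def by (simp add: mm_lin matrix_mul_assoc algebra_simps)
  also have "\<dots> = 0" using cof by (simp add: mm_zero_r)
  finally show ?thesis using lhs by simp
qed



lemma det_eta3: "det eta3 = -1"
  by (simp add: det_3 eta3_def)

lemma lorentzian_det: assumes "lorentzian G" shows "det G < 0"
proof -
  obtain P :: "real^3^3" where P: "transpose P ** G ** P = eta3" using assms unfolding lorentzian_def by blast
  then have "det P * det G * det P = -1" using det_eta3 by (metis det_mul det_transpose)
  then have "(det P * det P) * det G = -1" by (simp add: algebra_simps)
  moreover have "det P * det P \<ge> 0" by simp
  ultimately show ?thesis
  proof -
    assume h: "(det P * det P) * det G = -1" "det P * det P \<ge> 0"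
    show ?thesis
    proof (rule ccontr)
      assume "\<not> det G < 0"
      then have "det G \<ge> 0" by simp
      from mult_nonneg_nonneg[OF h(2) this] h(1) show False by simp
    qed
  qed
qed

lemma pd_DERIV:
  assumes "pd_exists m f p"
  shows "((\<lambda>t. f (p + t *\<^sub>R axis m 1)) has_real_derivative pd m f p) (at 0)"
  using assms unfolding pd_exists_def pd_def coord_line_def
  by (simp add: DERIV_deriv_iff_real_differentiable)

lemma line_lemma:
  fixes g :: "real^3 \<Rightarrow> real^3^3" and \<alpha> :: "real^3 \<Rightarrow> real^3"
  assumes dg: "det (g p) < 0"
    and eg: "\<And>i j. pd_exists m (\<lambda>q. g q $ i $ j) p"
    and ea: "\<And>i. pd_exists m (\<lambda>q. \<alpha> q $ i) p"
  shows "pd m (\<lambda>q. phi g \<alpha> q $ k $ i) p =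
     ((vol (g p) / 2 * trace (matrix_inv (g p) ** (\<chi> i j. pd m (\<lambda>q. g q $ i $ j) p))) *\<^sub>R
        (matrix_inv (g p) ** Cx (reeb g \<alpha> p))
      + vol (g p) *\<^sub>R ((- (matrix_inv (g p) ** (\<chi> i j. pd m (\<lambda>q. g q $ i $ j) p) ** matrix_inv (g p)))
            ** Cx (reeb g \<alpha> p)
          + matrix_inv (g p) ** Cx (\<chi> k. pd m (\<lambda>q. reeb g \<alpha> q $ k) p))) $ k $ i"
proof -
  define gl where "gl = (\<lambda>t. g (p + t *\<^sub>R axis m 1))"
  define al where "al = (\<lambda>t. \<alpha> (p + t *\<^sub>R axis m 1))"
  define xl where "xl = (\<lambda>t. reeb g \<alpha> (p + t *\<^sub>R axis m 1))"
  define Gd where "Gd = (\<chi> i j. pd m (\<lambda>q. g q $ i $ j) p)"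
  define xd where "xd = (\<chi> k. pd m (\<lambda>q. reeb g \<alpha> q $ k) p)"
  have g0: "gl 0 = g p" "al 0 = \<alpha> p" "xl 0 = reeb g \<alpha> p" by (simp_all add: gl_def al_def xl_def)
  have MG: "MD gl Gd" unfolding MD_def gl_def Gd_def using pd_DERIV[OF eg] by simp
  have VA: "VD al (\<chi> i. pd m (\<lambda>q. \<alpha> q $ i) p)" unfolding VD_def al_def using pd_DERIV[OF ea] by simp
  have MI: "MD (\<lambda>t. matrix_inv (gl t)) (- (matrix_inv (gl 0) ** Gd ** matrix_inv (gl 0)))"
    by (rule MD_inv[OF MG]) (use dg g0 in simp)
  have xl_eq: "xl = (\<lambda>t. matrix_inv (gl t) *v al t)" unfolding xl_def gl_def al_def reeb_def by simp
  have VX0: "VD xl (- (matrix_inv (gl 0) ** Gd ** matrix_inv (gl 0)) *v al 0 + matrix_inv (gl 0) *v (\<chi> i. pd m (\<lambda>q. \<alpha> q $ i) p))"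
    unfolding xl_eq by (rule MV_mult[OF MI VA])
  have VX: "VD xl xd"
  proof -
    have "xd = - (matrix_inv (gl 0) ** Gd ** matrix_inv (gl 0)) *v al 0 + matrix_inv (gl 0) *v (\<chi> i. pd m (\<lambda>q. \<alpha> q $ i) p)"
      (is "_ = ?v")
    proof -
      have "pd m (\<lambda>q. reeb g \<alpha> q $ k) p = ?v $ k" for k
        using VX0 unfolding VD_def xl_def pd_def coord_line_def by (metis DERIV_imp_deriv)
      then show ?thesis unfolding xd_def by (simp add: vec_eq_iff)
    qed
    then show ?thesis using VX0 by simp
  qed
  have MV: "DERIV (\<lambda>t. vol (gl t)) 0 :> vol (gl 0) / 2 * trace (matrix_inv (gl 0) ** Gd)"
    by (rule vol_deriv[OF MG]) (use dg g0 in simp)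
  have MC: "MD (\<lambda>t. Cx (xl t)) (Cx xd)" by (rule MD_Cx[OF VX])
  have MM: "MD (\<lambda>t. matrix_inv (gl t) ** Cx (xl t))
     (- (matrix_inv (gl 0) ** Gd ** matrix_inv (gl 0)) ** Cx (xl 0) + matrix_inv (gl 0) ** Cx xd)"
    by (rule MD_mult[OF MI MC])
  have MP: "MD (\<lambda>t. vol (gl t) *\<^sub>R (matrix_inv (gl t) ** Cx (xl t)))
     ((vol (gl 0) / 2 * trace (matrix_inv (gl 0) ** Gd)) *\<^sub>R (matrix_inv (gl 0) ** Cx (xl 0))
      + vol (gl 0) *\<^sub>R (- (matrix_inv (gl 0) ** Gd ** matrix_inv (gl 0)) ** Cx (xl 0) + matrix_inv (gl 0) ** Cx xd))"
    by (rule MD_scale[OF MV MM])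
  have pe: "(\<lambda>t. phi g \<alpha> (p + t *\<^sub>R axis m 1) $ k $ i) = (\<lambda>t. (vol (gl t) *\<^sub>R (matrix_inv (gl t) ** Cx (xl t))) $ k $ i)"
    unfolding gl_def xl_def by (simp add: phi_eq)
  have D: "DERIV (\<lambda>t. phi g \<alpha> (p + t *\<^sub>R axis m 1) $ k $ i) 0 :>
     ((vol (gl 0) / 2 * trace (matrix_inv (gl 0) ** Gd)) *\<^sub>R (matrix_inv (gl 0) ** Cx (xl 0))
      + vol (gl 0) *\<^sub>R (- (matrix_inv (gl 0) ** Gd ** matrix_inv (gl 0)) ** Cx (xl 0) + matrix_inv (gl 0) ** Cx xd)) $ k $ i"
    unfolding pe by (rule MP[unfolded MD_def, rule_format])
  then have "pd m (\<lambda>q. phi g \<alpha> q $ k $ i) p =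
     ((vol (gl 0) / 2 * trace (matrix_inv (gl 0) ** Gd)) *\<^sub>R (matrix_inv (gl 0) ** Cx (xl 0))
      + vol (gl 0) *\<^sub>R (- (matrix_inv (gl 0) ** Gd ** matrix_inv (gl 0)) ** Cx (xl 0) + matrix_inv (gl 0) ** Cx xd)) $ k $ i"
    unfolding pd_def coord_line_def by (rule DERIV_imp_deriv)
  then show ?thesis by (simp only: g0 Gd_def xd_def)
qed

theorem mainTheorem5:
  fixes U :: "(real^3) set" and g :: "real^3 \<Rightarrow> real^3^3" and \<alpha> :: "real^3 \<Rightarrow> real^3"
  assumes "null_contact U g \<alpha>"
    and "K_contact U g \<alpha>"
  shows "sasakian U g \<alpha>"
  unfolding sasakian_def
proof
  fix p assume pU: "p \<in> U"
  have lm: "lorentz_metric_on U g" using assms(1) by (simp add: null_contact_def)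
  have dg: "det (g p) < 0" using lm pU lorentzian_det by (simp add: lorentz_metric_on_def)
  have sm1: "\<And>f. smooth_fun_on U f \<Longrightarrow> pd_exists m f p" for m
  proof -
    fix f assume "smooth_fun_on U f"
    then have "smoothk (Suc 0) f U" unfolding smooth_fun_on_def by blast
    then show "pd_exists m f p" using pU by simp
  qed
  have eg: "\<And>m i j. pd_exists m (\<lambda>q. g q $ i $ j) p"
    using lm sm1 by (simp add: lorentz_metric_on_def)
  have ea: "\<And>m i. pd_exists m (\<lambda>q. \<alpha> q $ i) p"
    using assms(1) sm1 by (simp add: null_contact_def)
  define Ai where "Ai = matrix_inv (g p)"
  define x where "x = reeb g \<alpha> p"
  define Gd where "Gd = (\<lambda>m. (\<chi> i j. pd m (\<lambda>q. g q $ i $ j) p) :: real^3^3)"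
  define xd where "xd = (\<lambda>m. (\<chi> k. pd m (\<lambda>q. reeb g \<alpha> q $ k) p) :: real^3)"
  define P where "P = vol (g p) *\<^sub>R (Ai ** Cx x)"
  define Pd where "Pd = (\<lambda>m. (vol (g p)/2 * trace (Ai ** Gd m)) *\<^sub>R (Ai ** Cx x)
               + vol (g p) *\<^sub>R ((- (Ai ** Gd m ** Ai)) ** Cx x + Ai ** Cx (xd m)))"
  have GA: "g p ** Ai = mat 1" "Ai ** g p = mat 1" unfolding Ai_def using inv_props dg by auto
  have K: "(\<chi> i j. (\<Sum>m\<in>UNIV. x$m * Gd m $i$j) + (\<Sum>m\<in>UNIV. g p$m$j * xd i $ m)
               + (\<Sum>m\<in>UNIV. g p$i$m * xd j $ m)) = (0::real^3^3)"
    using assms(2) pU unfolding K_contact_def lie02_def x_def Gd_def xd_def by simp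
  have fin: "(\<chi> k i. (\<Sum>m\<in>UNIV. x$m * Pd m $k$i) - (\<Sum>m\<in>UNIV. P$m$i * xd m $k)
               + (\<Sum>m\<in>UNIV. P$k$m * xd i $m)) = (0::real^3^3)"
    by (rule final_alg[OF GA K P_def]) (simp add: Pd_def)
  have pdP: "pd m (\<lambda>q. phi g \<alpha> q $ k $ i) p = Pd m $ k $ i" for m k i
    unfolding Pd_def Ai_def x_def Gd_def xd_def by (rule line_lemma[OF dg eg ea])
  have phip: "phi g \<alpha> p = P" unfolding P_def Ai_def x_def by (simp add: phi_eq)
  have xdk: "\<And>m k. pd m (\<lambda>q. reeb g \<alpha> q $ k) p = xd m $ k" unfolding xd_def by simp
  have xp: "reeb g \<alpha> p = x" by (simp add: x_def)
  show "frak_h g \<alpha> p = 0"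
    unfolding frak_h_def lie11_def pdP phip xdk xp using fin .
qed


end
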